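(* Let $0<q<1$. Then \[ \widetilde{\Gamma}_q(z+1)=(q^{-z}[z]_q)^{q^{-z}}\widetilde{\Gamma}_q(z),\qquad \widetilde{\Gamma}_q(1)=1,\qquad \frac{d^2}{dz^2}\log\widetilde{\Gamma}_q(z+1)\ge0\quad(z\ge0 \text{ real}). \] In particular, for every positive integer $n$, \[ \widetilde{\Gamma}_q(n+1)=q^{-\sum_{k=1}^nkq^{-k}}\prod_{k=1}^n([k]_q)^{q^{-k}}. \]
   Context: $[w]_q:=(1-q^w)/(1-q)$. For $\mathrm{Re}(s)>1$, $\tilde\zeta_q(s,z):=\sum_{n=0}^\infty q^{(n+z)(s-1)}[n+z]_q^{-s}$; this extends meromorphically in $s$ and is holomorphic at $s=0$. Define $\widetilde{\Gamma}_q(z):=\exp\bigl(\frac{\partial}{\partial s}\tilde\zeta_q(s,z)|_{s=0}-\frac{\partial}{\partial s}\tilde\zeta_q(s,1)|_{s=0}\bigr)$ for $\mathrm{Re}(z)>0$, extended meromorphically to $z\in\mathbb{C}$. *)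

theory Defs
  imports "HOL-Complex_Analysis.Complex_Analysis"
begin

definition qnum :: "real \<Rightarrow> complex \<Rightarrow> complex" where
  "qnum q w = (1 - complex_of_real q powr w) / (1 - complex_of_real q)"

definition tzeta_series :: "real \<Rightarrow> complex \<Rightarrow> complex \<Rightarrow> complex" where
  "tzeta_series q s z =
     (\<Sum>n. complex_of_real q powr ((of_nat n + z) * (s - 1)) * (qnum q (of_nat n + z)) powr (- s))"

text \<open>Analytic continuation in s (as a function of s, for fixed z): a function holomorphic on
  some connected open set containing the half-plane Re s > 1 and the point 0, agreeing with
  the series on Re s > 1.  By the identity theorem, its germ at 0 is uniquely determined
  (given that the meromorphic continuation is holomorphic at 0).\<close>
definition tzeta_cont :: "real \<Rightarrow> complex \<Rightarrow> complex \<Rightarrow> complex" where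
  "tzeta_cont q z = (SOME f. \<exists>S. open S \<and> connected S \<and> 0 \<in> S \<and> {s. 1 < Re s} \<subseteq> S \<and>
       f holomorphic_on S \<and> (\<forall>s. 1 < Re s \<longrightarrow> f s = tzeta_series q s z))"

definition tGamma :: "real \<Rightarrow> complex \<Rightarrow> complex" where
  "tGamma q z = exp (deriv (tzeta_cont q z) 0 - deriv (tzeta_cont q 1) 0)"

end

theory Submission
  imports Defs
begin

definition EE :: "real \<Rightarrow> complex \<Rightarrow> complex" where
  "EE q w = exp (of_real (ln q) * w)"

definition cc :: "nat \<Rightarrow> complex \<Rightarrow> complex" where
  "cc k s = pochhammer s k / fact k"

lemma EE_add: "EE q (a + b) = EE q a * EE q b"
  by (simp add: EE_def distrib_left exp_add)

lemma EE_0[simp]: "EE q 0 = 1" by (simp add: EE_def)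

lemma EE_nat_mult: "EE q (of_nat n * w) = EE q w ^ n"
  by (simp add: EE_def exp_of_nat_mult[symmetric] algebra_simps)

lemma norm_EE: "norm (EE q w) = exp (ln q * Re w)"
  by (simp add: EE_def)

lemma EE_of_real: "0 < q \<Longrightarrow> EE q (of_real x) = of_real (q powr x)"
  by (simp add: EE_def powr_def exp_of_real[symmetric] mult.commute)

lemma powr_EE: "0 < q \<Longrightarrow> complex_of_real q powr w = EE q w"
  by (simp add: powr_def EE_def Ln_of_real mult.commute)

lemma EE_has_deriv[derivative_intros]:
  "(f has_field_derivative f') (at x within S) \<Longrightarrow>
   ((\<lambda>x. EE q (f x)) has_field_derivative (of_real (ln q) * f' * EE q (f x))) (at x within S)"
  unfolding EE_def by (auto intro!: derivative_eq_intros)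

lemma EE_holo[holomorphic_intros]: "f holomorphic_on S \<Longrightarrow> (\<lambda>x. EE q (f x)) holomorphic_on S"
  unfolding EE_def by (auto intro!: holomorphic_intros)

lemma EE_cont[continuous_intros]: "continuous_on S f \<Longrightarrow> continuous_on S (\<lambda>x. EE q (f x))"
  unfolding EE_def by (auto intro!: continuous_intros)

lemma pochhammer_holo[holomorphic_intros]:
  "f holomorphic_on S \<Longrightarrow> (\<lambda>x. pochhammer (f x :: complex) k) holomorphic_on S"
  unfolding pochhammer_prod by (auto intro!: holomorphic_intros)

lemma cc_holo[holomorphic_intros]: "f holomorphic_on S \<Longrightarrow> (\<lambda>x. cc k (f x)) holomorphic_on S"
  unfolding cc_def by (auto intro!: holomorphic_intros)

lemma cc_0: "0 < k \<Longrightarrow> cc k 0 = 0"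
  by (simp add: cc_def pochhammer_0_left)

lemma norm_pochhammer_le: "norm (pochhammer (s::complex) k) \<le> pochhammer (norm s) k"
  unfolding pochhammer_prod
  by (simp add: prod_norm[symmetric] del: prod_norm)
     (intro prod_mono, auto intro: order.trans[OF norm_triangle_ineq])
   
lemma norm_cc_le: "norm (cc k s) \<le> pochhammer (norm s) k / fact k"
  unfolding cc_def by (simp add: norm_divide divide_right_mono norm_pochhammer_le)

lemma binom_cc:
  assumes "norm (u::complex) < 1"
  shows "(\<lambda>k. cc k s * u ^ k) sums ((1 - u) powr (- s))"
proof -
  have "norm (-u) < 1" using assms by simp
  from gen_binomial_complex[OF this, of "-s"]
  have "(\<lambda>k. ((-s) gchoose k) * (-u) ^ k) sums ((1 + - u) powr (- s))" .
  moreover have "((-s) gchoose k) * (-u) ^ k = cc k s * u ^ k" for k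
  proof -
    have "(-1::complex)^k * (-1)^k = 1" by (simp flip: power_mult_distrib)
    then show ?thesis by (simp add: gbinomial_pochhammer cc_def power_minus[of u] field_simps)
  qed
  ultimately show ?thesis by simp
qed

lemma binom_real:
  assumes "0 \<le> r" "r < (1::real)"
  shows "(\<lambda>k. pochhammer R k / fact k * r ^ k) sums ((1 - r) powr (- R))"
proof -
  have "\<bar>-r\<bar> < 1" using assms by simp
  from gen_binomial_real[OF this, of "-R"]
  have "(\<lambda>k. ((-R) gchoose k) * (-r) ^ k) sums ((1 + - r) powr (- R))" .
  moreover have "((-R) gchoose k) * (-r) ^ k = pochhammer R k / fact k * r ^ k" for k
  proof -
    have "(-1::real)^k * (-1)^k = 1" by (simp flip: power_mult_distrib)
    then show ?thesis by (simp add: gbinomial_pochhammer power_minus[of r] field_simps)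
  qed
  ultimately show ?thesis by simp
qed

definition TT :: "real \<Rightarrow> nat \<Rightarrow> complex \<Rightarrow> complex \<Rightarrow> complex" where
  "TT q k z s = cc k s * EE q (z * (s + of_nat k - 1)) / (1 - EE q (s + of_nat k - 1))"

lemma nat_sums_infsum: "f summable_on (UNIV::nat set) \<Longrightarrow> f sums infsum f UNIV"
  by (rule has_sum_imp_sums[OF has_sum_infsum])

context
  fixes q :: real
  assumes q0: "0 < q" and q1: "q < 1"
begin

lemma lnq: "ln q < 0" using q0 q1 by simp

lemma norm_EE_lt1: "0 < Re w \<Longrightarrow> norm (EE q w) < 1"
  using lnq by (simp add: norm_EE mult_neg_pos)

lemma EE_ne1: "0 < Re w \<Longrightarrow> EE q w \<noteq> 1"
  using norm_EE_lt1 by fastforce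

lemma qnum_powr:
  assumes "0 < Re w"
  shows "qnum q w powr (-s) = exp (s * of_real (ln (1-q))) * (1 - EE q w) powr (-s)"
proof -
  have ne: "1 - EE q w \<noteq> 0" using EE_ne1[OF assms] by simp
  have qn: "qnum q w = (1 - EE q w) / of_real (1-q)"
    by (simp add: qnum_def powr_EE[OF q0])
  have "Ln (qnum q w) = Ln (1 - EE q w) - ln (1-q)"
    unfolding qn by (rule Ln_divide_of_real) (use q1 ne in auto)
  moreover have "qnum q w \<noteq> 0" using ne q1 by (simp add: qn)
  ultimately have "qnum q w powr (-s) = exp(-s * (Ln (1 - EE q w) - ln(1-q)))"
    by (simp add: powr_def)
  also have "\<dots> = exp (s * of_real (ln (1-q))) * exp (-s * Ln (1 - EE q w))"
    by (simp add: algebra_simps flip: exp_add)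
  also have "exp (-s * Ln (1 - EE q w)) = (1 - EE q w) powr (-s)"
    using ne by (simp add: powr_def)
  finally show ?thesis .
qed

lemma prod_summable:
  fixes B1 B2 :: "nat \<Rightarrow> real"
  assumes "(B1 has_sum S1) UNIV" "(B2 has_sum S2) UNIV" "\<And>n. B1 n \<ge> 0" "\<And>k. B2 k \<ge> 0"
  shows "(\<lambda>(n,k). B1 n * B2 k) summable_on UNIV"
proof -
  have "(\<lambda>(n,k). B1 n * B2 k) summable_on Sigma UNIV (\<lambda>_. UNIV)"
  proof (rule summable_on_SigmaI[where g = "\<lambda>n. B1 n * S2"])
    show "((\<lambda>k. case (n, k) of (n, k) \<Rightarrow> B1 n * B2 k) has_sum B1 n * S2) UNIV" for n
      using has_sum_cmult_right[OF assms(2), of "B1 n"] by simp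
    show "(\<lambda>n. B1 n * S2) summable_on UNIV"
      using assms(1) by (intro summable_on_cmult_left) (auto simp: summable_on_def)
  qed (use assms in auto)
  then show ?thesis by simp
qed

lemma series_sums:
  assumes z: "0 < Re z" and s: "1 < Re s"
  shows "(\<lambda>n. complex_of_real q powr ((of_nat n + z) * (s - 1)) * qnum q (of_nat n + z) powr (-s))
           sums (exp (s * of_real (ln (1-q))) * (\<Sum>k. TT q k z s))"
    and "summable (\<lambda>k. TT q k z s)"
proof -
  define a where "a n k = cc k s * EE q ((of_nat n + z) * (s + of_nat k - 1))" for n k
  define r where "r = exp (ln q * Re z)"
  define p where "p = exp (ln q * (Re s - 1))"
  define C where "C = exp (ln q * (Re z * (Re s - 1) - Im z * Im s))"
  define B1 where "B1 n = C * p ^ n" for n :: nat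
  define B2 where "B2 k = pochhammer (norm s) k / fact k * r ^ k" for k :: nat
  have r: "0 \<le> r" "r < 1" using lnq z by (auto simp: r_def mult_neg_pos)
  have p: "0 \<le> p" "p < 1" using lnq s by (auto simp: p_def mult_neg_pos)
  have ns: "norm s > 0" using s by auto
  have B2nn: "B2 k \<ge> 0" for k using r ns pochhammer_nonneg[of "norm s" k] by (simp add: B2_def)
  have B1nn: "B1 n \<ge> 0" for n using p by (auto simp: B1_def C_def)
  have B2s: "B2 sums ((1 - r) powr (- norm s))" unfolding B2_def by (rule binom_real[OF r])
  have B2h: "(B2 has_sum ((1 - r) powr (- norm s))) UNIV"
    by (rule sums_nonneg_imp_has_sum[OF B2s B2nn])
  have B1s: "B1 sums (C * (1 / (1 - p)))" unfolding B1_def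
    by (rule sums_mult) (rule geometric_sums, use p in auto)
  have B1h: "(B1 has_sum (C * (1 / (1 - p)))) UNIV"
    by (rule sums_nonneg_imp_has_sum[OF B1s B1nn])
  have bound: "norm (a n k) \<le> B1 n * B2 k" for n k
  proof -
    have "norm (a n k) = norm (cc k s) * exp (ln q * Re ((of_nat n + z) * (s + of_nat k - 1)))"
      by (simp add: a_def norm_mult norm_EE)
    also have "\<dots> \<le> pochhammer (norm s) k / fact k * exp (ln q * Re ((of_nat n + z) * (s + of_nat k - 1)))"
      by (rule mult_right_mono[OF norm_cc_le]) simp
    also have "exp (ln q * Re ((of_nat n + z) * (s + of_nat k - 1))) \<le> C * p^n * r^k"
    proof -
      have e: "C * p^n * r^k = exp (ln q * (Re z * (Re s - 1) - Im z * Im s) + real n * (ln q * (Re s - 1)) + real k * (ln q * Re z))"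
        by (simp add: C_def p_def r_def exp_add exp_of_nat_mult)
      have "ln q * Re ((of_nat n + z) * (s + of_nat k - 1)) = ln q * (Re z * (Re s - 1) - Im z * Im s) + real n * (ln q * (Re s - 1)) + real k * (ln q * Re z) + ln q * (real n * real k)"
        by (simp add: algebra_simps)
      moreover have "ln q * (real n * real k) \<le> 0" using lnq by (simp add: mult_nonpos_nonneg)
      ultimately show ?thesis unfolding e by simp
    qed
    then have "pochhammer (norm s) k / fact k * exp (ln q * Re ((of_nat n + z) * (s + of_nat k - 1))) \<le> pochhammer (norm s) k / fact k * (C * p^n * r^k)"
      by (rule mult_left_mono) (use ns pochhammer_nonneg[of "norm s" k] in simp)
    also have "\<dots> = B1 n * B2 k" by (simp add: B1_def B2_def)
    finally show ?thesis .
  qed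
  have A: "(\<lambda>(n,k). a n k) summable_on UNIV"
  proof -
    have "(\<lambda>x. norm (case x of (n,k) \<Rightarrow> a n k)) summable_on UNIV"
    proof (rule Infinite_Sum.abs_summable_on_comparison_test)
      show "(\<lambda>x. norm (case x of (n,k) \<Rightarrow> B1 n * B2 k)) summable_on UNIV"
        using prod_summable[OF B1h B2h B1nn B2nn] B1nn B2nn
        by (simp add: case_prod_unfold abs_mult)
      show "norm (case x of (n, k) \<Rightarrow> a n k) \<le> norm (case x of (n, k) \<Rightarrow> B1 n * B2 k)" for x
        using bound[of "fst x" "snd x"] B1nn[of "fst x"] B2nn[of "snd x"]
        by (simp add: case_prod_unfold abs_mult)
    qed
    then show ?thesis by (simp add: summable_on_iff_abs_summable_on_complex)
  qed
  have A2: "(\<lambda>(k,n). a n k) summable_on UNIV"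
  proof -
    have "(\<lambda>x. norm (case x of (k,n) \<Rightarrow> a n k)) summable_on UNIV"
    proof (rule Infinite_Sum.abs_summable_on_comparison_test)
      show "(\<lambda>x. norm (case x of (k,n) \<Rightarrow> B2 k * B1 n)) summable_on UNIV"
        using prod_summable[OF B2h B1h B2nn B1nn] B1nn B2nn
        by (simp add: case_prod_unfold abs_mult)
      show "norm (case x of (k, n) \<Rightarrow> a n k) \<le> norm (case x of (k, n) \<Rightarrow> B2 k * B1 n)" for x
        using bound[of "snd x" "fst x"] B1nn[of "snd x"] B2nn[of "fst x"]
        by (simp add: case_prod_unfold abs_mult mult.commute)
    qed
    then show ?thesis by (simp add: summable_on_iff_abs_summable_on_complex)
  qed
  define row where "row n = EE q ((of_nat n + z) * (s - 1)) * (1 - EE q (of_nat n + z)) powr (-s)" for n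
  have rows: "(\<lambda>k. a n k) sums row n" for n
  proof -
    have "norm (EE q (of_nat n + z)) < 1" by (rule norm_EE_lt1) (use z in simp)
    from sums_mult[OF binom_cc[OF this, of s], of "EE q ((of_nat n + z) * (s - 1))"]
    have "(\<lambda>k. EE q ((of_nat n + z) * (s - 1)) * (cc k s * EE q (of_nat n + z) ^ k)) sums row n"
      by (simp add: row_def)
    moreover have "EE q ((of_nat n + z) * (s - 1)) * (cc k s * EE q (of_nat n + z) ^ k) = a n k" for k
    proof -
      have "(of_nat n + z) * (s + of_nat k - 1) = (of_nat n + z) * (s - 1) + of_nat k * (of_nat n + z)"
        by (simp add: algebra_simps)
      then show ?thesis by (simp add: a_def EE_add EE_nat_mult)
    qed
    ultimately show ?thesis by simp
  qed
  have cols: "(\<lambda>n. a n k) sums TT q k z s" for k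
  proof -
    define w where "w = s + of_nat k - 1"
    have "norm (EE q w) < 1" by (rule norm_EE_lt1) (use s in \<open>simp add: w_def\<close>)
    from sums_mult[OF geometric_sums[OF this], of "cc k s * EE q (z * w)"]
    have "(\<lambda>n. cc k s * EE q (z * w) * EE q w ^ n) sums TT q k z s"
      by (simp add: TT_def w_def)
    moreover have "cc k s * EE q (z * w) * EE q w ^ n = a n k" for n
    proof -
      have "(of_nat n + z) * w = z * w + of_nat n * w" by (simp add: algebra_simps)
      then show ?thesis by (simp add: a_def EE_add EE_nat_mult w_def)
    qed
    ultimately show ?thesis by simp
  qed
  have rowsum: "(\<lambda>k. a n k) summable_on UNIV" for n
    using summable_on_SigmaD1[of a UNIV "\<lambda>_. UNIV" n] A by simp
  have colsum: "(\<lambda>n. a n k) summable_on UNIV" for k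
    using summable_on_SigmaD1[of "\<lambda>k n. a n k" UNIV "\<lambda>_. UNIV" k] A2 by simp
  have rowinf: "infsum (\<lambda>k. a n k) UNIV = row n" for n
    using sums_unique2[OF nat_sums_infsum[OF rowsum] rows] .
  have colinf: "infsum (\<lambda>n. a n k) UNIV = TT q k z s" for k
    using sums_unique2[OF nat_sums_infsum[OF colsum] cols] .
  have swap: "infsum (\<lambda>n. infsum (\<lambda>k. a n k) UNIV) UNIV = infsum (\<lambda>k. infsum (\<lambda>n. a n k) UNIV) UNIV"
    by (rule infsum_swap_banach) (use A in simp)
  have rs: "(\<lambda>n. infsum (\<lambda>k. a n k) UNIV) summable_on UNIV"
    using summable_on_Sigma_banach[of a UNIV "\<lambda>_. UNIV"] A by simp
  have cs: "(\<lambda>k. infsum (\<lambda>n. a n k) UNIV) summable_on UNIV"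
    using summable_on_Sigma_banach[of "\<lambda>k n. a n k" UNIV "\<lambda>_. UNIV"] A2 by simp
  have T_sums: "(\<lambda>k. TT q k z s) sums infsum (\<lambda>k. TT q k z s) UNIV"
    using nat_sums_infsum[OF cs] by (simp add: colinf)
  then show "summable (\<lambda>k. TT q k z s)" by (rule sums_summable)
  have "row sums infsum (\<lambda>k. TT q k z s) UNIV"
    using nat_sums_infsum[OF rs] swap by (simp add: rowinf colinf)
  then have row_sums: "row sums (\<Sum>k. TT q k z s)" using T_sums sums_unique by metis
  have "complex_of_real q powr ((of_nat n + z) * (s - 1)) * qnum q (of_nat n + z) powr (-s)
        = exp (s * of_real (ln (1-q))) * row n" for n
    using qnum_powr[of "of_nat n + z" s] z by (simp add: powr_EE[OF q0] row_def)
  then show "(\<lambda>n. complex_of_real q powr ((of_nat n + z) * (s - 1)) * qnum q (of_nat n + z) powr (-s))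
           sums (exp (s * of_real (ln (1-q))) * (\<Sum>k. TT q k z s))"
    using sums_mult[OF row_sums] by simp
qed

end

definition PP :: "real \<Rightarrow> complex set" where
  "PP q = {s. s \<noteq> 0 \<and> (\<exists>k::nat. EE q (s + of_nat k - 1) = 1)}"

definition UU :: "real \<Rightarrow> complex set" where
  "UU q = - PP q"

context
  fixes q :: real
  assumes q0: "0 < q" and q1: "q < 1"
begin

lemma lnq': "ln q < 0" using q0 q1 by simp

lemma EE_eq_1: "EE q w = 1 \<longleftrightarrow> Re w = 0 \<and> (\<exists>n::int. Im w * ln q = 2 * of_int n * pi)"
  using lnq' by (simp add: EE_def exp_eq_1 mult.commute)

lemma PP_lattice:
  assumes "s \<in> PP q"
  obtains k :: nat and n :: int where "Re s = 1 - real k" "Im s = 2 * of_int n * pi / ln q"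
proof -
  from assms obtain k :: nat where "EE q (s + of_nat k - 1) = 1" by (auto simp: PP_def)
  then obtain n :: int where "Re s + real k - 1 = 0" "Im s * ln q = 2 * of_int n * pi"
    by (auto simp: EE_eq_1)
  then have "Re s = 1 - real k" "Im s = 2 * of_int n * pi / ln q" using lnq' by (auto simp: field_simps)
  then show ?thesis using that by blast
qed

lemma countable_PP: "countable (PP q)"
proof -
  have "PP q \<subseteq> (\<lambda>(k::nat, n::int). Complex (1 - real k) (2 * of_int n * pi / ln q)) ` UNIV"
  proof
    fix s assume "s \<in> PP q"
    then obtain k :: nat and n :: int where "Re s = 1 - real k" "Im s = 2 * of_int n * pi / ln q"
      by (rule PP_lattice)
    then have "s = (\<lambda>(k::nat, n::int). Complex (1 - real k) (2 * of_int n * pi / ln q)) (k, n)"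
      by (simp add: complex_eq_iff)
    then show "s \<in> (\<lambda>(k::nat, n::int). Complex (1 - real k) (2 * of_int n * pi / ln q)) ` UNIV" by blast
  qed
  then show ?thesis by (rule countable_subset) simp
qed

lemma closed_PP: "closed (PP q)"
proof (rule discrete_imp_closed[of "min 1 (- 2 * pi / ln q)"])
  show "0 < min 1 (- 2 * pi / ln q)" using lnq' by (simp add: divide_pos_neg)
  show "\<forall>x\<in>PP q. \<forall>y\<in>PP q. dist y x < min 1 (- 2 * pi / ln q) \<longrightarrow> y = x"
  proof (intro ballI impI)
    fix x y assume x: "x \<in> PP q" and y: "y \<in> PP q" and d: "dist y x < min 1 (- 2 * pi / ln q)"
    obtain k1 :: nat and n1 :: int where 1: "Re x = 1 - real k1" "Im x = 2 * of_int n1 * pi / ln q"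
      using x by (rule PP_lattice)
    obtain k2 :: nat and n2 :: int where 2: "Re y = 1 - real k2" "Im y = 2 * of_int n2 * pi / ln q"
      using y by (rule PP_lattice)
    have "\<bar>Re (y - x)\<bar> < 1" using d abs_Re_le_cmod[of "y - x"] by (simp add: dist_norm)
    then have "\<bar>real k1 - real k2\<bar> < 1" using 1 2 by simp
    then have "k1 = k2" by linarith
    have "\<bar>Im (y - x)\<bar> < - 2 * pi / ln q" using d abs_Im_le_cmod[of "y - x"] by (simp add: dist_norm)
    then have "\<bar>2 * of_int (n2 - n1) * pi / ln q\<bar> < - 2 * pi / ln q" using 1 2 by (simp add: diff_divide_distrib algebra_simps)
    then have "\<bar>of_int (n2 - n1)\<bar> * (2 * pi / - ln q) < 1 * (2 * pi / - ln q)"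
      using lnq' by (simp add: abs_mult abs_divide divide_simps split: if_splits)
    then have "\<bar>of_int (n2 - n1) :: real\<bar> < 1"
      using lnq' by (subst (asm) mult_less_cancel_right) (auto simp: divide_simps)
    then have "n1 = n2" by linarith
    show "y = x" using 1 2 \<open>k1 = k2\<close> \<open>n1 = n2\<close> by (simp add: complex_eq_iff)
  qed
qed

lemma open_UU: "open (UU q)"
  using closed_PP by (simp add: UU_def open_Compl)

lemma connected_UU: "connected (UU q)"
proof -
  have "connected (UNIV - PP q)"
    by (rule connected_open_diff_countable) (auto simp: countable_PP)
  then show ?thesis by (simp add: UU_def Compl_eq_Diff_UNIV)
qed

lemma zero_UU: "0 \<in> UU q"
  by (simp add: UU_def PP_def)

lemma half_UU: "1 < Re s \<Longrightarrow> s \<in> UU q"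
proof -
  assume "1 < Re s"
  moreover have "s \<in> PP q \<Longrightarrow> Re s \<le> 1"
    by (erule PP_lattice) simp
  ultimately show "s \<in> UU q" by (auto simp: UU_def)
qed

lemma UU_ne1:
  assumes "s \<in> UU q" "k \<noteq> 1"
  shows "EE q (s + of_nat k - 1) \<noteq> 1"
proof (cases "s = 0")
  case True
  then show ?thesis using assms(2) by (auto simp: EE_eq_1)
next
  case False
  then show ?thesis using assms by (auto simp: UU_def PP_def)
qed

lemma UU_ne1': "s \<in> UU q \<Longrightarrow> s \<noteq> 0 \<Longrightarrow> EE q s \<noteq> 1"
  using UU_def PP_def by (auto dest!: spec[of _ 1])

end

definition hh :: "real \<Rightarrow> complex \<Rightarrow> complex" where
  "hh q s = (if s = 0 then - 1 / of_real (ln q) else s / (1 - EE q s))"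

definition VV :: "real \<Rightarrow> complex \<Rightarrow> complex \<Rightarrow> complex" where
  "VV q z s = (\<Sum>k. TT q (k+2) z s)"

definition GG :: "real \<Rightarrow> complex \<Rightarrow> complex \<Rightarrow> complex" where
  "GG q z s = TT q 0 z s + hh q s * EE q (z * s) + VV q z s"

definition FF :: "real \<Rightarrow> complex \<Rightarrow> complex \<Rightarrow> complex" where
  "FF q z s = exp (s * of_real (ln (1-q))) * GG q z s"

lemma pochhammer_mono_real:
  assumes "0 \<le> a" "a \<le> (b::real)"
  shows "pochhammer a n \<le> pochhammer b n"
  unfolding pochhammer_prod by (intro prod_mono) (use assms in auto)

lemma aux_eq: "0 < (r::real) \<Longrightarrow> a * (K * r^(k+1)) / (1/2) = 2 * K / r * (a * r^(k+2))"
  by (simp add: field_simps)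

context
  fixes q :: real
  assumes q0: "0 < q" and q1: "q < 1"
begin

lemma TT_holo: "k \<noteq> 1 \<Longrightarrow> TT q k z holomorphic_on UU q"
  unfolding TT_def using UU_ne1[OF q0 q1]
  by (auto intro!: holomorphic_intros)

lemma hh_lim: "((\<lambda>s. s / (1 - EE q s)) \<longlongrightarrow> - 1 / of_real (ln q)) (at 0)"
proof -
  have "((\<lambda>s. EE q s) has_field_derivative (of_real (ln q) * 1 * EE q 0)) (at 0)"
    by (intro derivative_intros)
  then have "((\<lambda>s. (EE q s - EE q 0) / (s - 0)) \<longlongrightarrow> of_real (ln q)) (at 0)"
    by (simp add: has_field_derivative_iff)
  then have "((\<lambda>s. -1 / ((EE q s - 1) / s)) \<longlongrightarrow> -1 / of_real (ln q)) (at 0)"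
    using lnq'[OF q0 q1] by (intro tendsto_divide tendsto_const) auto
  moreover have "eventually (\<lambda>s. -1 / ((EE q s - 1) / s) = s / (1 - EE q s)) (at 0)"
    unfolding eventually_at_filter
    by (intro always_eventually allI impI) (auto simp: divide_simps algebra_simps)
  ultimately show ?thesis by (simp add: tendsto_cong)
qed

lemma hh_holo: "hh q holomorphic_on UU q"
proof (rule no_isolated_singularity'[of "{0}"])
  show "open (UU q)" by (rule open_UU[OF q0 q1])
  show "finite {0::complex}" by simp
  have "((\<lambda>s. s / (1 - EE q s)) holomorphic_on (UU q - {0}))"
    using UU_ne1'[OF q0 q1] by (auto intro!: holomorphic_intros)
  then show "hh q holomorphic_on (UU q - {0})"
    by (rule holomorphic_transform) (auto simp: hh_def)
  fix z :: complex assume "z \<in> {0}"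
  then have z: "z = 0" by simp
  have "(hh q \<longlongrightarrow> - 1 / of_real (ln q)) (at 0)"
  proof -
    have "eventually (\<lambda>s. s / (1 - EE q s) = hh q s) (at 0)"
      unfolding eventually_at_filter by (intro always_eventually allI impI) (auto simp: hh_def)
    then show ?thesis using hh_lim by (simp add: tendsto_cong)
  qed
  then show "(hh q \<longlongrightarrow> hh q z) (at z within UU q)"
    using z by (auto simp: hh_def intro: tendsto_within_subset)
qed

lemma VV_series:
  assumes z: "0 < Re z"
  shows "\<exists>g'. \<forall>x\<in>UU q. (\<lambda>n. TT q (n+2) z x) sums VV q z x \<and>
            (\<lambda>n. deriv (TT q (n+2) z) x) sums g' x \<and> (VV q z has_field_derivative g' x) (at x)"
proof -
  have L: "ln q < 0" by (rule lnq'[OF q0 q1])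
  have hfd: "(TT q (n+2) z has_field_derivative deriv (TT q (n+2) z) x) (at x)" if "x \<in> UU q" for n x
    by (rule holomorphic_derivI[OF TT_holo open_UU[OF q0 q1] that]) simp
  have bnd: "\<exists>d h. 0 < d \<and> summable h \<and> (\<forall>\<^sub>F n in sequentially. \<forall>y\<in>ball x d \<inter> UU q. norm (TT q (n+2) z y) \<le> h n)"
    if "x \<in> UU q" for x
  proof -
    define R where "R = norm x + 1"
    define r where "r = exp (ln q * Re z)"
    define K where "K = exp (- ln q * norm z * R)"
    have R: "0 \<le> R" by (simp add: R_def)
    have r: "0 < r" "r < 1" using L z by (auto simp: r_def mult_neg_pos)
    obtain N :: nat where N: "R + ln (1/2) / ln q \<le> real N" using real_arch_simple by blast
    define h where "h k = 2 * K / r * (pochhammer R (k+2) / fact (k+2) * r^(k+2))" for k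
    have "summable (\<lambda>k. pochhammer R k / fact k * r^k)"
      using binom_real[of r R] r by (auto intro: sums_summable)
    then have "summable (\<lambda>k. pochhammer R (k+2) / fact (k+2) * r^(k+2))"
      by (subst summable_iff_shift) 
    then have hs: "summable h" unfolding h_def by (rule summable_mult)
    have "\<forall>k\<ge>N. \<forall>y\<in>ball x 1 \<inter> UU q. norm (TT q (k+2) z y) \<le> h k"
    proof (intro allI impI ballI)
      fix k y assume k: "N \<le> k" and y: "y \<in> ball x 1 \<inter> UU q"
      have ny: "norm y \<le> R" using y norm_triangle_ineq2[of y x] by (auto simp: R_def dist_norm norm_minus_commute)
      define w where "w = y + of_nat (k+1)"
      have w: "y + of_nat (k+2) - 1 = w" by (simp add: w_def)
      have a1: "norm (cc (k+2) y) \<le> pochhammer R (k+2) / fact (k+2)"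
      proof -
        have "pochhammer (norm y) (k+2) / fact (k+2) \<le> pochhammer R (k+2) / (fact (k+2) :: real)"
          by (rule divide_right_mono[OF pochhammer_mono_real[OF norm_ge_zero ny]]) simp
        then show ?thesis using norm_cc_le[of "k+2" y] by linarith
      qed
      have a2: "norm (EE q (z * w)) \<le> K * r^(k+1)"
      proof -
        have nzy: "- (norm z * R) \<le> Re (z * y)"
          using abs_Re_le_cmod[of "z*y"] mult_left_mono[OF ny, of "norm z"] by (auto simp: norm_mult)
        have "ln q * Re (z * y) \<le> - ln q * norm z * R"
        proof -
          have "ln q * Re (z*y) \<le> ln q * (-(norm z * R))"
            by (rule mult_left_mono_neg[OF nzy]) (use L in simp)
          then show ?thesis by simp
        qed
        moreover have "ln q * Re (z * w) = ln q * Re (z * y) + real (k+1) * (ln q * Re z)"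
          by (simp add: w_def algebra_simps)
        ultimately have "ln q * Re (z * w) \<le> - ln q * norm z * R + real (k+1) * (ln q * Re z)" by simp
        then have "exp (ln q * Re (z * w)) \<le> exp (- ln q * norm z * R + real (k+1) * (ln q * Re z))" by simp
        also have "\<dots> = K * r^(k+1)" by (simp only: K_def r_def exp_add exp_of_nat_mult)
        finally show ?thesis by (simp add: norm_EE)
      qed
      have a3: "1/2 \<le> norm (1 - EE q w)"
      proof -
        have "- R \<le> Re y" using abs_Re_le_cmod[of y] ny by linarith
        then have "ln (1/2) / ln q \<le> Re w" using N k by (simp add: w_def)
        then have "ln q * Re w \<le> ln (1/2)" using L by (simp add: divide_le_eq mult.commute)
        then have "exp (ln q * Re w) \<le> exp (ln (1/2))" by (rule exp_mono)
        then have "norm (EE q w) \<le> 1/2" by (simp add: norm_EE)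
        moreover have "1 - norm (EE q w) \<le> norm (1 - EE q w)" using norm_triangle_ineq2[of 1 "EE q w"] by simp
        ultimately show ?thesis by simp
      qed
      have "norm (TT q (k+2) z y) = norm (cc (k+2) y) * norm (EE q (z * w)) / norm (1 - EE q w)"
        unfolding TT_def w by (simp add: norm_mult norm_divide)
      also have "\<dots> \<le> (pochhammer R (k+2) / fact (k+2)) * (K * r^(k+1)) / (1/2)"
      proof (rule frac_le)
        have pn: "0 \<le> pochhammer R (k+2)" by (rule pochhammer_nonneg) (simp add: R_def add_nonneg_pos)
        have Kp: "0 \<le> K * r^(k+1)" using r by (simp add: K_def)
        show "0 \<le> (pochhammer R (k+2) / fact (k+2)) * (K * r^(k+1))"
          using pn Kp by simp
        show "norm (cc (k+2) y) * norm (EE q (z * w)) \<le> (pochhammer R (k+2) / fact (k+2)) * (K * r^(k+1))"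
          by (rule mult_mono[OF a1 a2]) (use pn in simp_all)
        show "0 < (1/2::real)" by simp
        show "1/2 \<le> norm (1 - EE q w)" by (rule a3)
      qed
      also have "\<dots> = h k" unfolding h_def by (rule aux_eq[OF r(1)])
      finally show "norm (TT q (k+2) z y) \<le> h k" .
    qed
    then have "\<forall>\<^sub>F n in sequentially. \<forall>y\<in>ball x 1 \<inter> UU q. norm (TT q (n+2) z y) \<le> h n"
      unfolding eventually_sequentially by blast
    then show ?thesis using hs by (intro exI[of _ 1] exI[of _ h]) auto
  qed
  obtain g g' where gg: "\<forall>x\<in>UU q. (\<lambda>n. TT q (n+2) z x) sums g x \<and> (\<lambda>n. deriv (TT q (n+2) z) x) sums g' x \<and> (g has_field_derivative g' x) (at x)"
  proof -
    have "\<exists>g g'. \<forall>x\<in>UU q. (\<lambda>n. TT q (n+2) z x) sums g x \<and> (\<lambda>n. deriv (TT q (n+2) z) x) sums g' x \<and> (g has_field_derivative g' x) (at x)"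
      by (rule series_and_derivative_comparison_local[OF open_UU[OF q0 q1] hfd bnd])
    then show ?thesis using that by blast
  qed
  have Vg: "VV q z x = g x" if "x \<in> UU q" for x
  proof -
    from gg that have "(\<lambda>n. TT q (n+2) z x) sums g x" by blast
    then show ?thesis unfolding VV_def by (rule sums_unique[symmetric])
  qed
  show ?thesis
  proof (intro exI[of _ g'] ballI conjI)
    fix x assume x: "x \<in> UU q"
    from gg x have A: "(\<lambda>n. TT q (n+2) z x) sums g x" "(\<lambda>n. deriv (TT q (n+2) z) x) sums g' x"
        "(g has_field_derivative g' x) (at x)" by blast+
    show "(\<lambda>n. TT q (n+2) z x) sums VV q z x" using A(1) Vg[OF x] by simp
    show "(\<lambda>n. deriv (TT q (n+2) z) x) sums g' x" by (rule A(2))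
    show "(VV q z has_field_derivative g' x) (at x)"
      by (rule has_field_derivative_transform_within_open[OF A(3) open_UU[OF q0 q1] x]) (simp add: Vg)
  qed
qed

lemma VV_holo: "0 < Re z \<Longrightarrow> VV q z holomorphic_on UU q"
  using VV_series[of z] open_UU[OF q0 q1]
  by (auto simp: holomorphic_on_open field_differentiable_def)

lemma GG_holo: "0 < Re z \<Longrightarrow> GG q z holomorphic_on UU q"
  unfolding GG_def using TT_holo[of 0 z] hh_holo VV_holo[of z]
  by (intro holomorphic_intros) auto

lemma FF_holo: "0 < Re z \<Longrightarrow> FF q z holomorphic_on UU q"
  unfolding FF_def using GG_holo[of z] by (intro holomorphic_intros) auto

lemma FF_series:
  assumes z: "0 < Re z" and s: "1 < Re s"
  shows "FF q z s = tzeta_series q s z"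
proof -
  have sm: "summable (\<lambda>k. TT q k z s)" by (rule series_sums(2)[OF q0 q1 z s])
  have "(\<Sum>k. TT q k z s) = TT q 0 z s + TT q 1 z s + (\<Sum>k. TT q (k+2) z s)"
  proof -
    have "(\<Sum>k. TT q (Suc (Suc k)) z s) = (\<Sum>k. TT q (Suc k) z s) - TT q 1 z s"
      using suminf_split_head[of "\<lambda>k. TT q (Suc k) z s"] sm summable_Suc_iff[of "\<lambda>k. TT q k z s"] by simp
    also have "\<dots> = (\<Sum>k. TT q k z s) - TT q 0 z s - TT q 1 z s"
      using suminf_split_head[OF sm] by simp
    finally show ?thesis by (simp add: algebra_simps)
  qed
  moreover have "s \<noteq> 0" using s by auto
  then have "TT q 1 z s = hh q s * EE q (z * s)"
    by (simp add: TT_def hh_def cc_def)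
  ultimately have "FF q z s = exp (s * of_real (ln (1-q))) * (\<Sum>k. TT q k z s)"
    by (simp add: FF_def GG_def VV_def)
  then show ?thesis
    using series_sums(1)[OF q0 q1 z s] by (simp add: tzeta_series_def sums_iff)
qed

lemma tzeta_cont_deriv:
  assumes z: "0 < Re z"
  shows "deriv (tzeta_cont q z) 0 = deriv (FF q z) 0"
proof -
  define P where "P = (\<lambda>f. \<exists>S. open S \<and> connected S \<and> 0 \<in> S \<and> {s. 1 < Re s} \<subseteq> S \<and>
       f holomorphic_on S \<and> (\<forall>s. 1 < Re s \<longrightarrow> f s = tzeta_series q s z))"
  have "P (FF q z)" unfolding P_def
    using open_UU[OF q0 q1] connected_UU[OF q0 q1] zero_UU[OF q0 q1] half_UU[OF q0 q1]
      FF_holo[OF z] FF_series[OF z]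
    by (intro exI[of _ "UU q"]) auto
  then have "P (SOME f. P f)" using someI[of P "FF q z"] by simp
  moreover have "tzeta_cont q z = (SOME f. P f)" unfolding tzeta_cont_def P_def by simp
  ultimately have "P (tzeta_cont q z)" by simp
  then obtain S where S: "open S" "connected S" "0 \<in> S" "{s. 1 < Re s} \<subseteq> S"
      "tzeta_cont q z holomorphic_on S" "\<And>s. 1 < Re s \<Longrightarrow> tzeta_cont q z s = tzeta_series q s z"
    unfolding P_def by blast
  define S' where "S' = S - PP q"
  have oS': "open S'" using S closed_PP[OF q0 q1] by (auto simp: S'_def)
  have cS': "connected S'" unfolding S'_def
    by (rule connected_open_diff_countable) (use S countable_PP[OF q0 q1] in auto)
  have sub: "S' \<subseteq> UU q" by (auto simp: S'_def UU_def)
  have H: "{s. 1 < Re s} \<subseteq> S'" using S half_UU[OF q0 q1] by (auto simp: S'_def UU_def)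
  have 0: "0 \<in> S'" using S zero_UU[OF q0 q1] by (auto simp: S'_def UU_def)
  have eq: "tzeta_cont q z w = FF q z w" if "w \<in> S'" for w
  proof (rule analytic_continuation_open[of "{s. 1 < Re s}" S' "tzeta_cont q z" "FF q z" w])
    show "open {s. 1 < Re s}" by (rule open_halfspace_Re_gt)
    show "{s. 1 < Re s} \<noteq> {}" by (auto intro!: exI[of _ 2])
    show "tzeta_cont q z holomorphic_on S'" using S by (auto intro: holomorphic_on_subset simp: S'_def)
    show "FF q z holomorphic_on S'" using FF_holo[OF z] sub by (rule holomorphic_on_subset)
    show "\<And>s. s \<in> {s. 1 < Re s} \<Longrightarrow> tzeta_cont q z s = FF q z s"
      using S FF_series[OF z] by auto
  qed (use oS' cS' H that in auto)
  have "eventually (\<lambda>w. tzeta_cont q z w = FF q z w) (nhds 0)"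
    unfolding eventually_nhds using oS' 0 eq by blast
  then show ?thesis by (rule deriv_cong_ev) simp
qed

end

definition WW :: "real \<Rightarrow> complex \<Rightarrow> complex" where
  "WW q z = (\<Sum>k. EE q (z * of_nat (k+1)) / (of_nat (k+2) * (1 - EE q (of_nat (k+1)))))"

definition D0 :: "real \<Rightarrow> complex \<Rightarrow> complex" where
  "D0 q z = (of_real (ln q) * z * EE q (-z) * (1 - EE q (-1)) + EE q (-z) * (of_real (ln q) * EE q (-1)))
            / ((1 - EE q (-1)) * (1 - EE q (-1)))"

definition Ez0 :: "real \<Rightarrow> complex \<Rightarrow> complex" where
  "Ez0 q z = of_real (ln (1-q)) * EE q (-z) / (1 - EE q (-1)) + D0 q z - z + WW q z"

context
  fixes q :: real
  assumes q0: "0 < q" and q1: "q < 1"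
begin

lemma EEm1_ne1: "EE q (-1) \<noteq> 1"
  using lnq'[OF q0 q1] by (simp add: EE_eq_1[OF q0 q1])

lemma EE_nat_ne1: "EE q (of_nat (k+1)) \<noteq> 1"
  using lnq'[OF q0 q1] by (simp add: EE_eq_1[OF q0 q1])

lemma UU_ne1b: "s \<in> UU q \<Longrightarrow> 1 - EE q (s + of_nat (k+1)) \<noteq> 0"
  using UU_ne1[OF q0 q1, of s "k+2"] by (simp add: add_ac)

lemma deriv_TT0:
  "deriv (TT q (k+2) z) 0 = EE q (z * of_nat (k+1)) / (of_nat (k+2) * (1 - EE q (of_nat (k+1))))"
proof -
  define Rk where "Rk s = pochhammer (s+1) (k+1) / fact (k+2) * EE q (z * (s + of_nat (k+1))) / (1 - EE q (s + of_nat (k+1)))" for s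
  have eq: "TT q (k+2) z = (\<lambda>s. s * Rk s)"
  proof
    fix s :: complex
    have "pochhammer s (k+2) = s * pochhammer (s+1) (k+1)"
      using pochhammer_rec[of s "k+1"] by simp
    moreover have "s + of_nat (k+2) - 1 = s + of_nat (k+1)" by simp
    ultimately show "TT q (k+2) z s = s * Rk s"
      by (simp add: TT_def Rk_def cc_def add_ac mult_ac)
  qed
  have "Rk holomorphic_on UU q"
    unfolding Rk_def using UU_ne1b
    by (auto intro!: holomorphic_intros)
  then have "(Rk has_field_derivative deriv Rk 0) (at 0)"
    by (rule holomorphic_derivI[OF _ open_UU[OF q0 q1] zero_UU[OF q0 q1]])
  then have "((\<lambda>s. s * Rk s) has_field_derivative 1 * Rk 0 + deriv Rk 0 * 0) (at 0)"
    by (intro DERIV_mult DERIV_ident)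
  then have "deriv (\<lambda>s. s * Rk s) 0 = Rk 0"
    by (simp add: DERIV_imp_deriv)
  moreover have "Rk 0 = EE q (z * of_nat (k+1)) / (of_nat (k+2) * (1 - EE q (of_nat (k+1))))"
  proof -
    have "pochhammer (1::complex) (k+1) / fact (k+2) = 1 / of_nat (k+2)"
      by (simp add: pochhammer_fact[symmetric] del: of_nat_Suc fact_Suc)
         (simp add: fact_Suc field_simps del: of_nat_Suc)
    then show ?thesis by (simp add: Rk_def)
  qed
  ultimately show ?thesis unfolding eq by simp
qed

lemma VV_deriv0:
  assumes z: "0 < Re z"
  shows "(VV q z has_field_derivative WW q z) (at 0)" and "VV q z 0 = 0"
proof -
  obtain g' where g': "\<forall>x\<in>UU q. (\<lambda>n. TT q (n+2) z x) sums VV q z x \<and>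
            (\<lambda>n. deriv (TT q (n+2) z) x) sums g' x \<and> (VV q z has_field_derivative g' x) (at x)"
    using VV_series[OF q0 q1 z] by blast
  then have "(\<lambda>n. deriv (TT q (n+2) z) 0) sums g' 0" "(VV q z has_field_derivative g' 0) (at 0)"
    using zero_UU[OF q0 q1] by auto
  moreover have "g' 0 = WW q z"
  proof -
    have "(\<lambda>n. deriv (TT q (n+2) z) 0) = (\<lambda>k. EE q (z * of_nat (k+1)) / (of_nat (k+2) * (1 - EE q (of_nat (k+1)))))"
      by (rule ext) (rule deriv_TT0)
    with calculation(1) show ?thesis unfolding WW_def by (simp add: sums_iff)
  qed
  ultimately show "(VV q z has_field_derivative WW q z) (at 0)" by simp
  show "VV q z 0 = 0" by (simp add: VV_def TT_def cc_0)
qed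

lemma TT0_deriv: "(TT q 0 z has_field_derivative D0 q z) (at 0)"
proof -
  have eq: "TT q 0 z = (\<lambda>s. EE q (z * (s - 1)) / (1 - EE q (s - 1)))"
    by (auto simp: TT_def cc_def)
  have "((\<lambda>s. EE q (z * (s - 1)) / (1 - EE q (s - 1))) has_field_derivative D0 q z) (at 0)"
    using EEm1_ne1
    by (auto intro!: derivative_eq_intros simp: D0_def)
  then show ?thesis by (simp add: eq)
qed

lemma FF_deriv0:
  assumes z: "0 < Re z"
  shows "deriv (FF q z) 0 = Ez0 q z + (deriv (hh q) 0 - of_real (ln (1-q)) / of_real (ln q))"
proof -
  have hd: "(hh q has_field_derivative deriv (hh q) 0) (at 0)"
    by (rule holomorphic_derivI[OF hh_holo[OF q0 q1] open_UU[OF q0 q1] zero_UU[OF q0 q1]])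
  have "(FF q z has_field_derivative
      of_real (ln (1-q)) * exp (0 * of_real (ln (1-q))) * GG q z 0 +
      exp (0 * of_real (ln (1-q))) * (D0 q z + (deriv (hh q) 0 * EE q (z * 0) + hh q 0 * (of_real (ln q) * z * EE q (z * 0))) + WW q z)) (at 0)"
    unfolding FF_def[abs_def] GG_def[abs_def]
    apply (rule TT0_deriv hd VV_deriv0(1)[OF z] derivative_eq_intros refl)+
    apply (simp add: algebra_simps)
    done
  then have "deriv (FF q z) 0 = of_real (ln (1-q)) * GG q z 0 +
      (D0 q z + (deriv (hh q) 0 + hh q 0 * (of_real (ln q) * z)) + WW q z)"
    by (simp add: DERIV_imp_deriv)
  moreover have "GG q z 0 = EE q (-z) / (1 - EE q (-1)) + hh q 0"
    by (simp add: GG_def VV_deriv0(2)[OF z] TT_def cc_def)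
  moreover have "hh q 0 = - 1 / of_real (ln q)" by (simp add: hh_def)
  ultimately show ?thesis
    using lnq'[OF q0 q1] by (simp add: Ez0_def field_simps)
qed

lemma tGamma_Ez0:
  assumes z: "0 < Re z"
  shows "tGamma q z = exp (Ez0 q z - Ez0 q 1)"
  unfolding tGamma_def
  using tzeta_cont_deriv[OF q0 q1 z] tzeta_cont_deriv[OF q0 q1, of 1] FF_deriv0[OF z] FF_deriv0[of 1]
  by simp

end

context
  fixes q :: real
  assumes q0: "0 < q" and q1: "q < 1"
begin

lemma qnum_ne0: "0 < Re z \<Longrightarrow> qnum q z \<noteq> 0"
  using EE_ne1[OF q0 q1, of z] q1 by (simp add: qnum_def powr_EE[OF q0])

lemma Ln_powr_times:
  assumes "Z \<noteq> 0"
  shows "Ln (complex_of_real q powr (- of_real x) * Z) = - of_real x * of_real (ln q) + Ln Z"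
proof -
  have 1: "complex_of_real q powr (- of_real x) = of_real (q powr (- x))"
    using q0 by (simp add: powr_of_real flip: of_real_minus)
  have 2: "Ln (of_real (q powr (- x)) * Z) = Ln (of_real (q powr (- x))) + Ln Z"
    by (rule Ln_times_of_real) (use q0 assms in auto)
  have 4: "Ln (complex_of_real (q powr (- x))) = of_real (ln (q powr (- x)))"
    by (rule Ln_of_real) (use q0 in simp)
  have 3: "ln (q powr (- x)) = - x * ln q" using q0 by (simp add: ln_powr)
  show ?thesis unfolding 1 2 4 3 by simp
qed

lemma powr_times_ne0: "Z \<noteq> 0 \<Longrightarrow> complex_of_real q powr (- of_real x) * Z \<noteq> 0"
  using q0 by simp

lemma tzeta_series_shift:
  assumes z: "0 < Re z" and s: "1 < Re s"
  shows "tzeta_series q s z = EE q (z * (s - 1)) * exp (- s * Ln (qnum q z)) + tzeta_series q s (z + 1)"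
proof -
  define f where "f n = complex_of_real q powr ((of_nat n + z) * (s - 1)) * qnum q (of_nat n + z) powr (-s)" for n :: nat
  have sm: "summable f" using series_sums(1)[OF q0 q1 z s] unfolding f_def by (rule sums_summable)
  have "(\<Sum>n. f (Suc n)) = suminf f - f 0" by (rule suminf_split_head[OF sm])
  moreover have "(\<Sum>n. f (Suc n)) = tzeta_series q s (z + 1)"
    unfolding tzeta_series_def f_def by (simp add: add_ac)
  moreover have "f 0 = EE q (z * (s - 1)) * exp (- s * Ln (qnum q z))"
  proof -
    have "qnum q z powr (-s) = exp (-s * Ln (qnum q z))" using qnum_ne0[OF z] by (simp add: powr_def)
    then show ?thesis by (simp add: f_def powr_EE[OF q0])
  qed
  ultimately show ?thesis by (simp add: tzeta_series_def f_def[symmetric])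
qed

lemma FF_shift:
  assumes z: "0 < Re z"
  shows "deriv (FF q z) 0 = EE q (- z) * (of_real (ln q) * z - Ln (qnum q z)) + deriv (FF q (z + 1)) 0"
proof -
  define Tm where "Tm s = EE q (z * (s - 1)) * exp (- s * Ln (qnum q z))" for s
  have z1: "0 < Re (z + 1)" using z by simp
  have eqU: "FF q z s = Tm s + FF q (z + 1) s" if "s \<in> UU q" for s
  proof (rule analytic_continuation_open[of "{s. 1 < Re s}" "UU q" "FF q z" "\<lambda>s. Tm s + FF q (z + 1) s" s])
    show "open {s. 1 < Re s}" by (rule open_halfspace_Re_gt)
    show "{s. 1 < Re s} \<noteq> {}" by (auto intro!: exI[of _ 2])
    show "FF q z holomorphic_on UU q" by (rule FF_holo[OF q0 q1 z])
    show "(\<lambda>s. Tm s + FF q (z + 1) s) holomorphic_on UU q"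
      unfolding Tm_def using FF_holo[OF q0 q1 z1] by (intro holomorphic_intros) auto
    show "\<And>s. s \<in> {s. 1 < Re s} \<Longrightarrow> FF q z s = Tm s + FF q (z + 1) s"
      using FF_series[OF q0 q1 z] FF_series[OF q0 q1 z1] tzeta_series_shift[OF z]
      by (auto simp: Tm_def)
  qed (use that open_UU[OF q0 q1] connected_UU[OF q0 q1] half_UU[OF q0 q1] in auto)
  have "eventually (\<lambda>s. FF q z s = Tm s + FF q (z + 1) s) (nhds 0)"
    unfolding eventually_nhds using open_UU[OF q0 q1] zero_UU[OF q0 q1] eqU by blast
  then have "deriv (FF q z) 0 = deriv (\<lambda>s. Tm s + FF q (z + 1) s) 0"
    by (rule deriv_cong_ev) simp
  also have "\<dots> = EE q (- z) * (of_real (ln q) * z - Ln (qnum q z)) + deriv (FF q (z + 1)) 0"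
  proof (rule DERIV_imp_deriv)
    have fd: "(FF q (z + 1) has_field_derivative deriv (FF q (z + 1)) 0) (at 0)"
      by (rule holomorphic_derivI[OF FF_holo[OF q0 q1 z1] open_UU[OF q0 q1] zero_UU[OF q0 q1]])
    have "(Tm has_field_derivative EE q (- z) * (of_real (ln q) * z - Ln (qnum q z))) (at 0)"
      unfolding Tm_def
      by (rule derivative_eq_intros refl)+ (simp add: algebra_simps)
    then show "((\<lambda>s. Tm s + FF q (z + 1) s) has_field_derivative
        EE q (- z) * (of_real (ln q) * z - Ln (qnum q z)) + deriv (FF q (z + 1)) 0) (at 0)"
      by (intro DERIV_add fd)
  qed
  finally show ?thesis .
qed

lemma tGamma_shift:
  assumes x: "0 < x"
  shows "tGamma q (of_real x + 1) =
    (complex_of_real q powr (- of_real x) * qnum q (of_real x))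
       powr (complex_of_real q powr (- of_real x)) * tGamma q (of_real x)"
proof -
  define z where "z = complex_of_real x"
  have z: "0 < Re z" "0 < Re (z + 1)" using x by (auto simp: z_def)
  have A: "complex_of_real q powr (- z) = of_real (q powr (- x))"
    using q0 by (simp add: powr_of_real z_def flip: of_real_minus)
  have Q: "qnum q z = of_real ((1 - q powr x) / (1 - q))"
    using q0 by (simp add: qnum_def z_def powr_of_real)
  have "q powr x < 1" using q0 q1 x by (simp add: powr_def mult_pos_neg)
  then have Qp: "0 < (1 - q powr x) / (1 - q)"
    using q1 by simp
  have lnA: "Ln (complex_of_real q powr (- z) * qnum q z) = - of_real x * of_real (ln q) + Ln (qnum q z)"
    unfolding z_def by (rule Ln_powr_times) (use qnum_ne0 x in simp)
  have ne: "complex_of_real q powr (- z) * qnum q z \<noteq> 0"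
    unfolding z_def by (rule powr_times_ne0) (use qnum_ne0 x in simp)
  have d: "deriv (tzeta_cont q z) 0 = EE q (- z) * (of_real (ln q) * z - Ln (qnum q z)) + deriv (tzeta_cont q (z+1)) 0"
    using FF_shift[OF z(1)] tzeta_cont_deriv[OF q0 q1 z(1)] tzeta_cont_deriv[OF q0 q1 z(2)] by simp
  have "tGamma q (z + 1) = exp (- (EE q (- z) * (of_real (ln q) * z - Ln (qnum q z)))) * tGamma q z"
  proof -
    have "deriv (tzeta_cont q (z+1)) 0 - deriv (tzeta_cont q 1) 0 =
       - (EE q (- z) * (of_real (ln q) * z - Ln (qnum q z))) + (deriv (tzeta_cont q z) 0 - deriv (tzeta_cont q 1) 0)"
      using d by (simp add: algebra_simps)
    then show ?thesis unfolding tGamma_def by (simp only: exp_add)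
  qed
  also have "exp (- (EE q (- z) * (of_real (ln q) * z - Ln (qnum q z)))) =
      (complex_of_real q powr (- z) * qnum q z) powr (complex_of_real q powr (- z))"
  proof -
    have "(complex_of_real q powr (- z) * qnum q z) powr (complex_of_real q powr (- z)) =
        exp (complex_of_real q powr (- z) * Ln (complex_of_real q powr (- z) * qnum q z))"
      unfolding powr_def[of "complex_of_real q powr (- z) * qnum q z"] by (simp only: ne if_False)
    also have "\<dots> = exp (complex_of_real q powr (- z) * (- of_real x * of_real (ln q) + Ln (qnum q z)))"
      by (simp only: lnA)
    finally show ?thesis by (simp add: z_def algebra_simps powr_EE[OF q0])
  qed
  finally show ?thesis by (simp add: z_def)
qed

lemma tGamma_1: "tGamma q 1 = 1"
  by (simp add: tGamma_def)

lemma step_form: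
  assumes x: "0 < x"
  shows "(complex_of_real q powr (- of_real x) * qnum q (of_real x)) powr (complex_of_real q powr (- of_real x))
     = complex_of_real q powr (- (of_real x * complex_of_real q powr (- of_real x)))
       * qnum q (of_real x) powr (complex_of_real q powr (- of_real x))"
proof -
  define A where "A = complex_of_real q powr (- of_real x)"
  define Q where "Q = qnum q (of_real x)"
  have Qne: "Q \<noteq> 0" unfolding Q_def by (rule qnum_ne0) (use x in simp)
  have ne: "A * Q \<noteq> 0" unfolding A_def by (rule powr_times_ne0[OF Qne])
  have ln1: "Ln (A * Q) = - of_real x * of_real (ln q) + Ln Q"
    unfolding A_def by (rule Ln_powr_times[OF Qne])
  have "(A * Q) powr A = exp (A * Ln (A * Q))"
    unfolding powr_def[of "A * Q" A] by (simp only: ne if_False)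
  also have "\<dots> = exp (- (of_real x * A) * of_real (ln q)) * exp (A * Ln Q)"
    unfolding ln1 by (simp add: algebra_simps flip: exp_add)
  also have "exp (A * Ln Q) = Q powr A"
    unfolding powr_def[of Q A] by (simp only: Qne if_False)
  also have "exp (- (of_real x * A) * of_real (ln q)) = complex_of_real q powr (- (of_real x * A))"
    using q0 by (simp add: powr_def Ln_of_real)
  finally show ?thesis by (simp add: A_def Q_def)
qed

lemma tGamma_nat:
  "tGamma q (of_nat n + 1) =
     complex_of_real q powr (- (\<Sum>k=1..n. of_nat k * complex_of_real q powr (- of_nat k)))
     * (\<Prod>k=1..n. (qnum q (of_nat k)) powr (complex_of_real q powr (- of_nat k)))"
proof (induction n)
  case 0
  then show ?case using q0 by (simp add: tGamma_1)
next
  case (Suc n)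
  define x where "x = real (Suc n)"
  have x: "0 < x" by (simp add: x_def)
  have Qne: "qnum q (of_nat (Suc n)) \<noteq> 0" using qnum_ne0[of "of_nat (Suc n)"] by simp
  have e: "complex_of_real q powr w = exp (w * of_real (ln q))" for w
    using q0 by (simp add: powr_def Ln_of_real)
  have "tGamma q (of_nat (Suc n) + 1) = tGamma q (of_real x + 1)" by (simp add: x_def)
  also have "\<dots> = (complex_of_real q powr (- of_real x) * qnum q (of_real x))
       powr (complex_of_real q powr (- of_real x)) * tGamma q (of_real x)"
    by (rule tGamma_shift[OF x])
  also have "tGamma q (of_real x) = tGamma q (of_nat n + 1)" by (simp add: x_def add.commute)
  also have "(complex_of_real q powr (- of_real x) * qnum q (of_real x))
       powr (complex_of_real q powr (- of_real x)) =
      complex_of_real q powr (- (of_nat (Suc n) * complex_of_real q powr (- of_nat (Suc n))))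
      * qnum q (of_nat (Suc n)) powr (complex_of_real q powr (- of_nat (Suc n)))"
    using step_form[OF x] by (simp add: x_def)
  also note Suc.IH
  finally show ?case
    by (simp add: e exp_add[symmetric] exp_diff algebra_simps)
qed

end

definition bb :: "real \<Rightarrow> nat \<Rightarrow> complex" where
  "bb q k = 1 / (of_nat (k+2) * (1 - EE q (of_nat (k+1))))"

definition ff :: "real \<Rightarrow> nat \<Rightarrow> nat \<Rightarrow> complex \<Rightarrow> complex" where
  "ff q j k z = (of_real (ln q) * of_nat (k+1)) ^ j * bb q k * EE q (z * of_nat (k+1))"

definition WWj :: "real \<Rightarrow> nat \<Rightarrow> complex \<Rightarrow> complex" where
  "WWj q j z = (\<Sum>k. ff q j k z)"

lemma p3: "pochhammer (3::real) k / fact k = (real k + 1) * (real k + 2) / 2"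
proof (induction k)
  case 0 then show ?case by simp
next
  case (Suc k)
  have "pochhammer (3::real) (Suc k) / fact (Suc k) = (3 + real k) / (real k + 1) * (pochhammer 3 k / fact k)"
    by (simp add: pochhammer_rec' field_simps)
  also have "\<dots> = (real (Suc k) + 1) * (real (Suc k) + 2) / 2"
    unfolding Suc by (simp add: field_simps)
  finally show ?case .
qed

lemma summable_sq:
  assumes "0 \<le> r" "r < (1::real)"
  shows "summable (\<lambda>k. real (k+1)^2 * r^k)"
proof -
  have "summable (\<lambda>k. pochhammer (3::real) k / fact k * r^k)"
    using binom_real[OF assms, of 3] by (rule sums_summable)
  then have s: "summable (\<lambda>k. 2 * (pochhammer (3::real) k / fact k * r^k))" by (rule summable_mult)
  show ?thesis
  proof (rule summable_comparison_test'[OF s])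
    fix k :: nat
    have "real (k+1)^2 \<le> (real k + 1) * (real k + 2)" by (simp add: power2_eq_square algebra_simps)
    then have "real (k+1)^2 * r^k \<le> (real k + 1) * (real k + 2) * r^k"
      using assms by (intro mult_right_mono) auto
    then show "norm (real (k+1)^2 * r^k) \<le> 2 * (pochhammer 3 k / fact k * r^k)"
      using assms by (simp add: p3)
  qed
qed

context
  fixes q :: real
  assumes q0: "0 < q" and q1: "q < 1"
begin

lemma ff_deriv: "(ff q j k has_field_derivative ff q (Suc j) k z) (at z)"
  unfolding ff_def[abs_def] by (rule derivative_eq_intros refl)+ (simp add: algebra_simps)

lemma norm_bb: "norm (bb q k) \<le> 1 / (1 - q)"
proof -
  have L: "ln q < 0" by (rule lnq'[OF q0 q1])
  have "norm (EE q (of_nat (k+1))) = exp (ln q * real (k+1))" by (simp add: norm_EE)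
  also have "\<dots> \<le> exp (ln q)" using L by (simp add: mult_le_cancel_left1)
  also have "\<dots> = q" using q0 by simp
  finally have "1 - q \<le> norm (1 - EE q (of_nat (k+1)))"
    using norm_triangle_ineq2[of 1 "EE q (of_nat (k+1))"] by simp
  moreover have "1 \<le> norm (of_nat (k+2) :: complex)" unfolding norm_of_nat by simp
  ultimately have "1 - q \<le> norm (of_nat (k+2) :: complex) * norm (1 - EE q (of_nat (k+1)))"
    using q1 by (metis mult_mono mult_1 norm_ge_zero order.trans less_eq_real_def diff_gt_0_iff_gt)
  then show ?thesis using q1 by (simp add: bb_def norm_divide norm_mult divide_simps)
qed

lemma ff_bound:
  assumes j: "j \<le> 2" and d: "0 < d" "d \<le> Re y"
  shows "norm (ff q j k y) \<le> (1 + \<bar>ln q\<bar>)^2 * exp (ln q * d) / (1 - q) * (real (k+1)^2 * exp (ln q * d)^k)"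
proof -
  have L: "ln q < 0" by (rule lnq'[OF q0 q1])
  have a: "norm ((of_real (ln q) * of_nat (k+1) :: complex) ^ j) \<le> ((1 + \<bar>ln q\<bar>) * real (k+1))^2"
  proof -
    have "norm ((of_real (ln q) * of_nat (k+1) :: complex) ^ j) = (\<bar>ln q\<bar> * real (k+1))^j"
      unfolding norm_power norm_mult norm_of_real norm_of_nat ..
    also have "\<dots> \<le> ((1 + \<bar>ln q\<bar>) * real (k+1))^j"
      by (intro power_mono mult_right_mono) auto
    also have "\<dots> \<le> ((1 + \<bar>ln q\<bar>) * real (k+1))^2"
      by (rule power_increasing[OF j]) (use mult_mono[of 1 "1 + \<bar>ln q\<bar>" 1 "1 + real k"] in simp)
    finally show ?thesis .
  qed
  have c: "norm (EE q (y * of_nat (k+1))) \<le> exp (ln q * d) * exp (ln q * d)^k"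
  proof -
    have "norm (EE q (y * of_nat (k+1))) = exp (real (k+1) * (ln q * Re y))" by (simp add: norm_EE algebra_simps)
    also have "\<dots> \<le> exp (real (k+1) * (ln q * d))"
      using L d by (simp add: mult_le_cancel_left_neg)
    also have "\<dots> = exp (ln q * d) * exp (ln q * d)^k" by (simp add: exp_of_nat_mult[symmetric] algebra_simps exp_add[symmetric])
    finally show ?thesis .
  qed
  have "norm (ff q j k y) = norm ((of_real (ln q) * of_nat (k+1) :: complex) ^ j) * norm (bb q k) * norm (EE q (y * of_nat (k+1)))"
    by (simp add: ff_def norm_mult)
  also have "\<dots> \<le> ((1 + \<bar>ln q\<bar>) * real (k+1))^2 * (1 / (1 - q)) * (exp (ln q * d) * exp (ln q * d)^k)"
    by (intro mult_mono a norm_bb c) (use q1 in auto)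
  also have "\<dots> = (1 + \<bar>ln q\<bar>)^2 * exp (ln q * d) / (1 - q) * (real (k+1)^2 * exp (ln q * d)^k)"
    by (simp add: power_mult_distrib mult_ac divide_inverse)
  finally show ?thesis .
qed

lemma WWj_deriv:
  assumes j: "j \<le> 1" and z: "0 < Re z"
  shows "(WWj q j has_field_derivative WWj q (Suc j) z) (at z)"
proof -
  have L: "ln q < 0" by (rule lnq'[OF q0 q1])
  define D where "D = {z::complex. 0 < Re z}"
  have oD: "open D" unfolding D_def by (rule open_halfspace_Re_gt)
  have hfd: "(ff q j n has_field_derivative ff q (Suc j) n x) (at x)" if "x \<in> D" for n x
    by (rule ff_deriv)
  have bnd: "\<exists>d h. 0 < d \<and> summable h \<and> (\<forall>\<^sub>F n in sequentially. \<forall>y\<in>ball x d \<inter> D. norm (ff q j n y) \<le> h n)"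
    if "x \<in> D" for x
  proof -
    have x: "0 < Re x" using that by (simp add: D_def)
    define e where "e = Re x / 2"
    have e: "0 < e" using x by (simp add: e_def)
    define r where "r = exp (ln q * e)"
    have r: "0 \<le> r" "r < 1" using L e by (auto simp: r_def mult_neg_pos)
    define C where "C = (1 + \<bar>ln q\<bar>)^2 * exp (ln q * e) / (1 - q)"
    have hs: "summable (\<lambda>k. C * (real (k+1)^2 * r^k))"
      by (rule summable_mult[OF summable_sq[OF r]])
    have "\<forall>y\<in>ball x e \<inter> D. norm (ff q j n y) \<le> C * (real (n+1)^2 * r^n)" for n
    proof
      fix y assume y: "y \<in> ball x e \<inter> D"
      have "\<bar>Re x - Re y\<bar> < e" using y abs_Re_le_cmod[of "x - y"] by (auto simp: dist_norm)
      then have "e \<le> Re y" using abs_ge_self[of "Re x - Re y"] unfolding e_def by linarith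
      from ff_bound[OF _ e this, of j n] j show "norm (ff q j n y) \<le> C * (real (n+1)^2 * r^n)"
        by (simp add: C_def r_def)
    qed
    then show ?thesis using e hs by (intro exI[of _ e] exI[of _ "\<lambda>k. C * (real (k+1)^2 * r^k)"]) auto
  qed
  have "\<exists>g g'. \<forall>x\<in>D. (\<lambda>n. ff q j n x) sums g x \<and> (\<lambda>n. ff q (Suc j) n x) sums g' x \<and> (g has_field_derivative g' x) (at x)"
    by (rule series_and_derivative_comparison_local[OF oD hfd bnd])
  then obtain g g' where gg: "\<forall>x\<in>D. (\<lambda>n. ff q j n x) sums g x \<and> (\<lambda>n. ff q (Suc j) n x) sums g' x \<and> (g has_field_derivative g' x) (at x)"
    by blast
  have zD: "z \<in> D" using z by (simp add: D_def)
  have gW: "g x = WWj q j x" if "x \<in> D" for x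
    using gg that unfolding WWj_def by (metis sums_unique)
  have "g' z = WWj q (Suc j) z"
    using gg zD unfolding WWj_def by (metis sums_unique)
  moreover have "(WWj q j has_field_derivative g' z) (at z)"
    by (rule has_field_derivative_transform_within_open[of g _ z D]) (use gg zD oD gW in auto)
  ultimately show ?thesis by simp
qed

end

definition cA :: "real \<Rightarrow> complex" where "cA q = of_real (ln (1-q)) / (1 - EE q (-1))"
definition cB :: "real \<Rightarrow> complex" where "cB q = of_real (ln q) / (1 - EE q (-1))"
definition cC :: "real \<Rightarrow> complex" where
  "cC q = of_real (ln q) * EE q (-1) / ((1 - EE q (-1)) * (1 - EE q (-1)))"

definition Ez1 :: "real \<Rightarrow> complex \<Rightarrow> complex" where
  "Ez1 q z = - of_real (ln q) * cA q * EE q (-z) + cB q * (EE q (-z) - of_real (ln q) * z * EE q (-z))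
     - of_real (ln q) * cC q * EE q (-z) - 1 + WWj q 1 z"

definition Ez2 :: "real \<Rightarrow> complex \<Rightarrow> complex" where
  "Ez2 q z = of_real (ln q)^2 * cA q * EE q (-z) + cB q * (of_real (ln q)^2 * z * EE q (-z) - 2 * of_real (ln q) * EE q (-z))
     + of_real (ln q)^2 * cC q * EE q (-z) + WWj q 2 z"

context
  fixes q :: real
  assumes q0: "0 < q" and q1: "q < 1"
begin

lemma WW_WWj: "WW q = WWj q 0"
  by (auto simp: WW_def WWj_def ff_def bb_def)

lemma Ez0_alt: "Ez0 q = (\<lambda>z. cA q * EE q (-z) + cB q * z * EE q (-z) + cC q * EE q (-z) - z + WWj q 0 z)"
proof
  fix z
  have ne: "1 - EE q (-1) \<noteq> 0" using EEm1_ne1[OF q0 q1] by simp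
  have "D0 q z = cB q * z * EE q (-z) + cC q * EE q (-z)"
    unfolding D0_def cB_def cC_def using ne by (simp add: divide_simps)
  then show "Ez0 q z = cA q * EE q (-z) + cB q * z * EE q (-z) + cC q * EE q (-z) - z + WWj q 0 z"
    by (simp add: Ez0_def cA_def WW_WWj)
qed

lemma Ez0_deriv:
  assumes z: "0 < Re z"
  shows "(Ez0 q has_field_derivative Ez1 q z) (at z)"
proof -
  have W: "(WWj q 0 has_field_derivative WWj q 1 z) (at z)" using WWj_deriv[OF q0 q1, of 0 z] z by simp
  show ?thesis
    unfolding Ez0_alt
    apply (rule derivative_eq_intros refl W)+
    apply (simp add: Ez1_def algebra_simps)
    done
qed

lemma Ez1_deriv:
  assumes z: "0 < Re z"
  shows "(Ez1 q has_field_derivative Ez2 q z) (at z)"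
proof -
  have W: "(WWj q 1 has_field_derivative WWj q 2 z) (at z)" using WWj_deriv[OF q0 q1, of 1 z] z by (simp add: numeral_2_eq_2)
  show ?thesis
    unfolding Ez1_def[abs_def]
    apply (rule derivative_eq_intros refl W)+
    apply (simp add: Ez2_def algebra_simps power2_eq_square)
    done
qed

end

definition rr :: "real \<Rightarrow> nat \<Rightarrow> nat \<Rightarrow> real \<Rightarrow> real" where
  "rr q j k t = (ln q * real (k+1)) ^ j / (real (k+2) * (1 - exp (ln q * real (k+1)))) * exp (ln q * (t * real (k+1)))"

context
  fixes q :: real
  assumes q0: "0 < q" and q1: "q < 1"
begin

lemma EE_real: "EE q (of_real r) = of_real (exp (ln q * r))"
  by (simp add: EE_def flip: of_real_mult exp_of_real)

lemma EE_neg_real: "EE q (- of_real r) = of_real (exp (ln q * (- r)))"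
  using EE_real[of "-r"] by simp

lemma EE_m1: "EE q (-1) = of_real (exp (- ln q))"
  using EE_real[of "-1"] by simp

lemma EE_nat: "EE q (of_nat n) = of_real (exp (ln q * real n))"
  using EE_real[of "real n"] by simp

lemma ff_real: "ff q j k (of_real t) = of_real (rr q j k t)"
proof -
  have "EE q (of_real t * of_nat (k+1)) = of_real (exp (ln q * (t * real (k+1))))"
    using EE_real[of "t * real (k+1)"] by simp
  moreover have "EE q (of_nat (k+1)) = of_real (exp (ln q * real (k+1)))" by (rule EE_nat)
  ultimately show ?thesis
    unfolding ff_def bb_def rr_def by simp
qed

lemma ff_summable:
  assumes j: "j \<le> 2" and z: "0 < Re z"
  shows "summable (\<lambda>k. ff q j k z)"
proof -
  have L: "ln q < 0" by (rule lnq'[OF q0 q1])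
  have r: "0 \<le> exp (ln q * Re z)" "exp (ln q * Re z) < 1" using L z by (auto simp: mult_neg_pos)
  have "summable (\<lambda>k. (1 + \<bar>ln q\<bar>)^2 * exp (ln q * Re z) / (1 - q) * (real (k+1)^2 * exp (ln q * Re z)^k))"
    by (rule summable_mult[OF summable_sq[OF r]])
  then show ?thesis
    by (rule summable_comparison_test') (rule ff_bound[OF q0 q1 j z order.refl])
qed

lemma WWj_real:
  assumes j: "j \<le> 2" and t: "0 < t"
  shows "summable (\<lambda>k. rr q j k t)" "WWj q j (of_real t) = of_real (\<Sum>k. rr q j k t)"
proof -
  have "summable (\<lambda>k. ff q j k (of_real t))" by (rule ff_summable[OF j]) (use t in simp)
  then show s: "summable (\<lambda>k. rr q j k t)" by (simp add: ff_real)
  show "WWj q j (of_real t) = of_real (\<Sum>k. rr q j k t)"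
    unfolding WWj_def ff_real by (rule suminf_of_real[OF s, symmetric])
qed

lemma rr2_nonneg: "0 \<le> rr q 2 k t"
proof -
  have L: "ln q < 0" by (rule lnq'[OF q0 q1])
  have "exp (ln q * real (k+1)) < 1" using L by (simp add: mult_neg_pos)
  then show ?thesis unfolding rr_def by (intro mult_nonneg_nonneg divide_nonneg_pos) auto
qed

lemma cA_real: "cA q = of_real (ln (1-q) / (1 - exp (- ln q)))"
  by (simp add: cA_def EE_m1)
lemma cB_real: "cB q = of_real (ln q / (1 - exp (- ln q)))"
  by (simp add: cB_def EE_m1)
lemma cC_real: "cC q = of_real (ln q * exp (- ln q) / ((1 - exp (- ln q)) * (1 - exp (- ln q))))"
  by (simp add: cC_def EE_m1)

lemma Ez0_Reals:
  assumes t: "0 < t"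
  shows "Ez0 q (of_real t) \<in> \<real>"
proof -
  have w: "WWj q 0 (of_real t) = of_real (\<Sum>k. rr q 0 k t)" by (rule WWj_real(2)) (use t in auto)
  show ?thesis
    unfolding Ez0_alt[OF q0 q1] cA_real cB_real cC_real EE_neg_real w
    by (auto intro!: Reals_add Reals_diff Reals_mult)
qed

lemma Ez2_value:
  assumes t: "1 \<le> t"
  shows "Ez2 q (of_real t) \<in> \<real> \<and> 0 \<le> Re (Ez2 q (of_real t))"
proof -
  define L where "L = ln q"
  define A where "A = exp (- L)"
  define e where "e = exp (L * (- t))"
  have L: "L < 0" unfolding L_def by (rule lnq'[OF q0 q1])
  have A: "1 < A" using L by (simp add: A_def)
  have e: "0 < e" by (simp add: e_def)
  have l: "ln (1 - q) < 0" using q0 q1 by simp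
  define X where "X = L^2 * (ln (1-q) / (1 - A)) * e
       + (ln q / (1 - A)) * (L^2 * t * e - 2 * L * e)
       + L^2 * (L * A / ((1 - A) * (1 - A))) * e + (\<Sum>k. rr q 2 k t)"
  have w: "WWj q 2 (of_real t) = of_real (\<Sum>k. rr q 2 k t)" by (rule WWj_real(2)) (use t in auto)
  have eq: "Ez2 q (of_real t) = of_real X"
    unfolding Ez2_def cA_real cB_real cC_real EE_neg_real w
    by (simp add: X_def L_def A_def e_def)
  have t1: "0 \<le> L^2 * (ln (1-q) / (1 - A)) * e"
    using A l e by (intro mult_nonneg_nonneg divide_nonpos_neg) auto
  define B where "B = L * t * (1 - A) - 2 * (1 - A) + L * A"
  have h1: "L * (1 - A) \<le> L * t * (1 - A)"
  proof -
    have "0 \<le> L * (1 - A)" using L A by (simp add: mult_nonpos_nonpos)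
    then have "1 * (L * (1 - A)) \<le> t * (L * (1 - A))" using t by (intro mult_right_mono) auto
    then show ?thesis by (simp add: mult_ac)
  qed
  have h2: "- L \<le> A - 1" using exp_ge_add_one_self[of "- L"] by (simp add: A_def)
  have h3: "L * (1 - A) = L - L * A" by (simp add: algebra_simps)
  have B1: "L * (1 - A) - 2 * (1 - A) + L * A \<le> B" unfolding B_def using h1 by linarith
  have B2: "L * (1 - A) - 2 * (1 - A) + L * A = 2 * (A - 1) + L" by (simp add: algebra_simps)
  have B3: "2 * (A - 1) + L \<le> B" using B1 B2 by simp
  have B4: "0 < 2 * (A - 1) + L" using h2 L by argo
  have B: "0 \<le> B" using B3 B4 by argo
  have t2: "(ln q / (1 - A)) * (L^2 * t * e - 2 * L * e) + L^2 * (L * A / ((1 - A) * (1 - A))) * e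
      = e * L^2 * B / ((1 - A) * (1 - A))"
  proof -
    define Dn where "Dn = 1 - A"
    have D: "Dn \<noteq> 0" using A by (simp add: Dn_def)
    have Balt: "B = L * t * Dn - 2 * Dn + L * A" by (simp add: B_def Dn_def)
    have "(L / Dn) * (L^2 * t * e - 2 * L * e) + L^2 * (L * A / (Dn * Dn)) * e = e * L^2 * B / (Dn * Dn)"
      using D unfolding Balt by (simp add: field_simps power2_eq_square)
    then show ?thesis by (simp add: Dn_def L_def)
  qed
  have "0 \<le> e * L^2 * B / ((1 - A) * (1 - A))"
  proof (rule divide_nonneg_pos)
    show "0 < (1 - A) * (1 - A)" using A by (intro mult_neg_neg) auto
    show "0 \<le> e * L^2 * B" using e B by simp
  qed
  moreover have "0 \<le> (\<Sum>k. rr q 2 k t)"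
    by (rule suminf_nonneg[OF WWj_real(1)[OF _ order.strict_trans2[OF zero_less_one t]]]) (auto intro: rr2_nonneg)
  ultimately have "0 \<le> X" unfolding X_def using t1 t2 by linarith
  then show ?thesis by (simp add: eq)
qed

end

context
  fixes q :: real
  assumes q0: "0 < q" and q1: "q < 1"
begin

lemma convex_part:
  assumes x: "0 \<le> x"
  shows "(deriv ^^ 2) (\<lambda>w. Ln (tGamma q (w + 1))) (of_real x) \<in> \<real> \<and>
         0 \<le> Re ((deriv ^^ 2) (\<lambda>w. Ln (tGamma q (w + 1))) (of_real x))"
proof -
  define f where "f = (\<lambda>w. Ln (tGamma q (w + 1)))"
  define g where "g = (\<lambda>w. Ez0 q (w + 1) - Ez0 q 1)"
  define T where "T = {w::complex. -1 < Re w}"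
  have oT: "open T" unfolding T_def by (rule open_halfspace_Re_gt)
  have xT: "of_real x \<in> T" using x by (simp add: T_def)
  have tG: "tGamma q (w + 1) = exp (g w)" if "w \<in> T" for w
    unfolding g_def by (rule tGamma_Ez0[OF q0 q1]) (use that in \<open>simp add: T_def\<close>)
  have gder: "(g has_field_derivative Ez1 q (w + 1)) (at w)" if "w \<in> T" for w
  proof -
    have "((\<lambda>w. Ez0 q (w + 1)) has_field_derivative Ez1 q (w + 1) * 1) (at w)"
      by (rule DERIV_chain2[OF Ez0_deriv[OF q0 q1]]) (use that in \<open>auto simp: T_def intro!: derivative_eq_intros\<close>)
    then show ?thesis unfolding g_def by (auto intro!: derivative_eq_intros)
  qed
  have g1der: "((\<lambda>w. Ez1 q (w + 1)) has_field_derivative Ez2 q (w + 1)) (at w)" if "w \<in> T" for w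
  proof -
    have "((\<lambda>w. Ez1 q (w + 1)) has_field_derivative Ez2 q (w + 1) * 1) (at w)"
      by (rule DERIV_chain2[OF Ez1_deriv[OF q0 q1]]) (use that in \<open>auto simp: T_def intro!: derivative_eq_intros\<close>)
    then show ?thesis by simp
  qed
  have "isCont g (of_real x)" by (rule DERIV_isCont[OF gder[OF xT]])
  then have "isCont (\<lambda>w. Im (g w)) (of_real x)" by (rule isCont_Im)
  moreover have "Im (g (of_real x)) = 0"
  proof -
    have "Ez0 q (of_real (x + 1)) \<in> \<real>" by (rule Ez0_Reals[OF q0 q1]) (use x in simp)
    moreover have "Ez0 q (of_real 1) \<in> \<real>" by (rule Ez0_Reals[OF q0 q1]) simp
    ultimately have "g (of_real x) \<in> \<real>" unfolding g_def by (auto intro!: Reals_diff)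
    then show ?thesis by (simp add: complex_is_Real_iff)
  qed
  ultimately have lim: "((\<lambda>w. Im (g w)) \<longlongrightarrow> 0) (nhds (of_real x))"
  proof -
    assume c: "isCont (\<lambda>w. Im (g w)) (of_real x)" and z: "Im (g (of_real x)) = 0"
    have "((\<lambda>w. Im (g w)) \<longlongrightarrow> Im (g (of_real x))) (nhds (of_real x))"
      using tendsto_at_iff_tendsto_nhds[of "\<lambda>w. Im (g w)" "of_real x"] c by (simp add: isCont_def)
    then show ?thesis using z by simp
  qed
  have ev1: "eventually (\<lambda>w. - pi < Im (g w)) (nhds (of_real x))"
    by (rule order_tendstoD(1)[OF lim]) simp
  have ev2: "eventually (\<lambda>w. Im (g w) < pi) (nhds (of_real x))"
    by (rule order_tendstoD(2)[OF lim]) simp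
  have ev3: "eventually (\<lambda>w. w \<in> T) (nhds (of_real x))"
    by (rule eventually_nhds_in_open[OF oT xT])
  have "eventually (\<lambda>w. f w = g w) (nhds (of_real x))"
    using ev1 ev2 ev3
  proof eventually_elim
    case (elim w)
    then show ?case unfolding f_def using tG[OF elim(3)] by (simp add: Ln_exp)
  qed
  then obtain S where S: "open S" "of_real x \<in> S" "\<And>w. w \<in> S \<Longrightarrow> f w = g w"
    unfolding eventually_nhds by blast
  have "eventually (\<lambda>w. deriv f w = deriv g w) (nhds (of_real x))"
    unfolding eventually_nhds
  proof (intro exI[of _ S] conjI ballI)
    fix y assume y: "y \<in> S"
    have "eventually (\<lambda>w. f w = g w) (nhds y)"
      unfolding eventually_nhds using S y by blast
    then show "deriv f y = deriv g y" by (rule deriv_cong_ev) simp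
  qed (use S in auto)
  then have "deriv (deriv f) (of_real x) = deriv (deriv g) (of_real x)"
    by (rule deriv_cong_ev) simp
  also have "deriv (deriv g) (of_real x) = deriv (\<lambda>w. Ez1 q (w + 1)) (of_real x)"
  proof (rule deriv_cong_ev)
    show "eventually (\<lambda>w. deriv g w = Ez1 q (w + 1)) (nhds (of_real x))"
      using ev3 by eventually_elim (rule DERIV_imp_deriv[OF gder])
  qed simp
  also have "\<dots> = Ez2 q (of_real x + 1)"
    by (rule DERIV_imp_deriv[OF g1der[OF xT]])
  also have "\<dots> = Ez2 q (of_real (x + 1))" by simp
  finally have eq: "(deriv ^^ 2) f (of_real x) = Ez2 q (of_real (x + 1))"
    by (simp add: numeral_2_eq_2)
  show ?thesis unfolding f_def[symmetric] eq
    by (rule Ez2_value[OF q0 q1]) (use x in simp)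
qed

end

theorem propositionA1:
  fixes q :: real
  assumes "0 < q" and "q < 1"
  shows "(\<forall>x::real. 0 < x \<longrightarrow>
            tGamma q (of_real x + 1) =
              (complex_of_real q powr (- of_real x) * qnum q (of_real x))
                powr (complex_of_real q powr (- of_real x)) * tGamma q (of_real x))
       \<and> tGamma q 1 = 1
       \<and> (\<forall>x::real. 0 \<le> x \<longrightarrow>
            (deriv ^^ 2) (\<lambda>w. Ln (tGamma q (w + 1))) (of_real x) \<in> \<real> \<and>
            0 \<le> Re ((deriv ^^ 2) (\<lambda>w. Ln (tGamma q (w + 1))) (of_real x)))
       \<and> (\<forall>n::nat. 0 < n \<longrightarrow>
            tGamma q (of_nat n + 1) =
              complex_of_real q powr (- (\<Sum>k=1..n. of_nat k * complex_of_real q powr (- of_nat k)))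
              * (\<Prod>k=1..n. (qnum q (of_nat k)) powr (complex_of_real q powr (- of_nat k))))"
  using tGamma_shift[OF assms] tGamma_1[OF assms] convex_part[OF assms] tGamma_nat[OF assms]
  by blast

end
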